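(* The complete bipartite graph $K_{3,3}$ is not isomorphic to the rook equivalence graph $G(B)$ of any Ferrers board $B$.
   Context: A Ferrers board is given by a weakly increasing sequence of non-negative integers $B=(b_1,\ldots,b_n)$ of column heights; it is the set of unit cells in the first quadrant lying in column $i$ and rows $1,\ldots,b_i$. Prepending columns of height $0$ on the left does not change the board, and boards are compared using the same number of columns by such padding. A placement of $k$ rooks on $B$ is a set of $k$ cells of $B$ no two in the same row or column; $r_k(B)$ is the number of such placements. Two boards are rook equivalent if they have equal $r_k$ for all $k\ge 0$. The rook equivalence graph $G(B)$ has as vertices all Ferrers boards rook equivalent to $B$, and $\{B_1,B_2\}$ is an edge iff, written with the same number of columns, $B_1$ and $B_2$ differ in exactly two columns $i$ and $j$, where $B_1$ has $k$ more cells than $B_2$ in column $i$ and $k$ fewer cells than $B_2$ in column $j$, for some $k>0$. *)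

theory Defs
  imports Main
begin

text \<open>A Ferrers board is a weakly increasing list of column heights (sorted list of nats).
  Column i (0-based) contains the cells in rows 1..b_i.\<close>

definition cells :: "nat list \<Rightarrow> (nat \<times> nat) set" where
  "cells B = {(i, j). i < length B \<and> 1 \<le> j \<and> j \<le> B ! i}"

definition rook_placements :: "nat list \<Rightarrow> nat \<Rightarrow> (nat \<times> nat) set set" where
  "rook_placements B k = {P. P \<subseteq> cells B \<and> card P = k \<and> inj_on fst P \<and> inj_on snd P}"

definition rook_num :: "nat list \<Rightarrow> nat \<Rightarrow> nat" where
  "rook_num B k = card (rook_placements B k)"

definition rook_equiv :: "nat list \<Rightarrow> nat list \<Rightarrow> bool" where
  "rook_equiv B1 B2 \<longleftrightarrow> (\<forall>k. rook_num B1 k = rook_num B2 k)"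

text \<open>Boards modulo prepended zero columns: canonical representative has no zero column.\<close>
definition canonical_board :: "nat list \<Rightarrow> bool" where
  "canonical_board B \<longleftrightarrow> sorted B \<and> 0 \<notin> set B"

definition pad :: "nat \<Rightarrow> nat list \<Rightarrow> nat list" where
  "pad n B = replicate (n - length B) 0 @ B"

definition rook_edge :: "nat list \<Rightarrow> nat list \<Rightarrow> bool" where
  "rook_edge B1 B2 \<longleftrightarrow>
     (let n = max (length B1) (length B2); P1 = pad n B1; P2 = pad n B2 in
      \<exists>i j k. i < n \<and> j < n \<and> i \<noteq> j \<and> k > 0 \<and>
        P1 ! i = P2 ! i + k \<and> P2 ! j = P1 ! j + k \<and>
        (\<forall>l<n. l \<noteq> i \<longrightarrow> l \<noteq> j \<longrightarrow> P1 ! l = P2 ! l))"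

definition rook_graph_vertices :: "nat list \<Rightarrow> nat list set" where
  "rook_graph_vertices B = {C. canonical_board C \<and> rook_equiv C B}"

definition graph_iso :: "'a set \<Rightarrow> ('a \<Rightarrow> 'a \<Rightarrow> bool) \<Rightarrow> 'b set \<Rightarrow> ('b \<Rightarrow> 'b \<Rightarrow> bool) \<Rightarrow> bool" where
  "graph_iso V E W F \<longleftrightarrow>
     (\<exists>f. bij_betw f V W \<and> (\<forall>u\<in>V. \<forall>v\<in>V. E u v \<longleftrightarrow> F (f u) (f v)))"

definition K33_vertices :: "nat set" where
  "K33_vertices = {0..<6}"

definition K33_edge :: "nat \<Rightarrow> nat \<Rightarrow> bool" where
  "K33_edge a b \<longleftrightarrow> (a < 3 \<longleftrightarrow> 3 \<le> b)"

end

theory Submission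
  imports Defs "HOL-Library.Multiset" "HOL-Computational_Algebra.Polynomial"
begin

lemma finite_cells: "finite (cells B)"
  by (rule finite_subset[of _ "SIGMA i:{..<length B}. {1..B!i}"]) (auto simp: cells_def)

lemma finite_rook_placements: "finite (rook_placements B k)"
  by (rule finite_subset[of _ "Pow (cells B)"]) (auto simp: rook_placements_def finite_cells)

lemma cells_snoc: "cells (b @ [h]) = cells b \<union> {(length b, j) | j. 1 \<le> j \<and> j \<le> h}"
  by (auto simp: cells_def nth_append less_Suc_eq)

lemma rook_num_0: "rook_num B 0 = 1"
proof -
  have "rook_placements B 0 = {{}}"
  proof (intro equalityI subsetI)
    fix P assume P: "P \<in> rook_placements B 0"
    then have "finite P" using finite_cells finite_subset by (auto simp: rook_placements_def)
    then show "P \<in> {{}}" using P by (simp add: rook_placements_def)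
  qed (auto simp: rook_placements_def)
  then show ?thesis by (simp add: rook_num_def)
qed

lemma placement_card_le:
  assumes "P \<in> rook_placements B k" shows "k \<le> length B"
proof -
  have s: "fst ` P \<subseteq> {..<length B}" and i: "inj_on fst P" and c: "card P = k"
    using assms by (auto simp: rook_placements_def cells_def)
  have "card (fst ` P) \<le> card {..<length B}" using s by (rule card_mono[rotated]) simp
  then show ?thesis using card_image[OF i] c by simp
qed

lemma rook_num_big: "length B < k \<Longrightarrow> rook_num B k = 0"
proof -
  assume "length B < k"
  then have "rook_placements B k = {}" using placement_card_le[of _ B k] by fastforce
  then show ?thesis by (simp add: rook_num_def)
qed

lemma placement_rows_le:
  assumes "P \<in> rook_placements b k" "\<forall>x\<in>set b. x \<le> h"
  shows "snd ` P \<subseteq> {1..h}" "card (snd ` P) = k"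
proof -
  show "snd ` P \<subseteq> {1..h}"
  proof
    fix j assume "j \<in> snd ` P"
    then obtain i where "(i,j) \<in> P" by force
    then have "i < length b" "1 \<le> j" "j \<le> b ! i" using assms(1) by (auto simp: rook_placements_def cells_def)
    moreover have "b ! i \<le> h" using assms(2) nth_mem[OF \<open>i < length b\<close>] by blast
    ultimately show "j \<in> {1..h}" by simp
  qed
  show "card (snd ` P) = k" using assms by (simp add: rook_placements_def card_image)
qed

lemma rook_num_snoc:
  assumes h: "\<forall>x\<in>set b. x \<le> h"
  shows "rook_num (b @ [h]) (Suc k) = rook_num b (Suc k) + (h - k) * rook_num b k"
proof -
  let ?n = "length b"
  let ?A = "{P \<in> rook_placements (b@[h]) (Suc k). \<forall>j. (?n, j) \<notin> P}"
  let ?B = "{P \<in> rook_placements (b@[h]) (Suc k). \<exists>j. (?n, j) \<in> P}"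
  let ?S = "Sigma (rook_placements b k) (\<lambda>Q. {1..h} - snd ` Q)"
  have split: "rook_placements (b@[h]) (Suc k) = ?A \<union> ?B" by blast
  have disj: "?A \<inter> ?B = {}" by blast
  have finA: "finite ?A" "finite ?B" using finite_rook_placements by auto
  have nb: "\<And>j. (?n, j) \<notin> cells b" by (simp add: cells_def)
  have A: "?A = rook_placements b (Suc k)"
  proof (intro equalityI subsetI)
    fix P assume P: "P \<in> ?A"
    then have "P \<subseteq> cells b" by (auto simp: rook_placements_def cells_snoc)
    then show "P \<in> rook_placements b (Suc k)" using P by (auto simp: rook_placements_def)
  next
    fix P assume P: "P \<in> rook_placements b (Suc k)"
    then show "P \<in> ?A" using nb by (auto simp: rook_placements_def cells_snoc)
  qed
  have "?B = (\<lambda>(Q,j). insert (?n, j) Q) ` ?S"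
  proof (intro equalityI subsetI)
    fix P assume "P \<in> ?B"
    then obtain j where j: "(?n, j) \<in> P" and P: "P \<subseteq> cells (b@[h])" "card P = Suc k"
      "inj_on fst P" "inj_on snd P" by (auto simp: rook_placements_def)
    have finP: "finite P" using P(1) finite_cells finite_subset by blast
    let ?Q = "P - {(?n, j)}"
    have Qc: "?Q \<subseteq> cells b"
    proof
      fix c assume c: "c \<in> ?Q"
      then have "fst c \<noteq> ?n" using P(3) j by (metis DiffD1 DiffD2 inj_onD prod.collapse singletonI fst_conv)
      then show "c \<in> cells b" using c P(1) by (auto simp: cells_snoc)
    qed
    have "card ?Q = k" using P(2) j finP by simp
    moreover have "inj_on fst ?Q" "inj_on snd ?Q" using P by (auto intro: inj_on_subset)
    ultimately have Qp: "?Q \<in> rook_placements b k" using Qc by (simp add: rook_placements_def)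
    have "j \<in> {1..h}" using j P(1) by (auto simp: cells_snoc cells_def)
    moreover have "j \<notin> snd ` ?Q"
    proof
      assume "j \<in> snd ` ?Q"
      then obtain c where "c \<in> ?Q" "snd c = j" by auto
      then show False using P(4) j by (metis DiffD1 DiffD2 inj_onD singletonI snd_conv)
    qed
    ultimately have "(?Q, j) \<in> ?S" using Qp by auto
    moreover have "P = insert (?n, j) ?Q" using j by auto
    ultimately show "P \<in> (\<lambda>(Q,j). insert (?n, j) Q) ` ?S"
      by (intro image_eqI[where x="(?Q,j)"]) auto
  next
    fix P assume "P \<in> (\<lambda>(Q,j). insert (?n, j) Q) ` ?S"
    then obtain Q j where Q: "Q \<in> rook_placements b k" and j: "j \<in> {1..h}" "j \<notin> snd ` Q"
      and PQ: "P = insert (?n, j) Q" by auto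
    have Qc: "Q \<subseteq> cells b" "card Q = k" "inj_on fst Q" "inj_on snd Q"
      using Q by (auto simp: rook_placements_def)
    have finQ: "finite Q" using Qc(1) finite_cells finite_subset by blast
    have nQ: "(?n, j) \<notin> Q" "?n \<notin> fst ` Q" using Qc(1) by (auto simp: cells_def)
    have "P \<subseteq> cells (b@[h])" using PQ Qc(1) j by (auto simp: cells_snoc)
    moreover have "card P = Suc k" using PQ nQ finQ Qc(2) by simp
    moreover have "inj_on fst P" using PQ Qc(3) nQ by auto
    moreover have "inj_on snd P" using PQ Qc(4) j(2) by auto
    ultimately show "P \<in> ?B" using PQ by (auto simp: rook_placements_def)
  qed
  moreover have "inj_on (\<lambda>(Q,j). insert (?n, j) Q) ?S"
  proof (rule inj_onI, clarsimp)
    fix Q j Q' j'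
    assume "Q \<in> rook_placements b k" "Q' \<in> rook_placements b k"
      and e: "insert (?n, j) Q = insert (?n, j') Q'"
    then have "?n \<notin> fst ` Q" "?n \<notin> fst ` Q'" by (auto simp: rook_placements_def cells_def)
    then have "(?n, j) \<notin> Q" "(?n, j') \<notin> Q'" by force+
    moreover have "(?n, j) \<in> insert (?n, j') Q'" using e by auto
    ultimately show "Q = Q' \<and> j = j'"
      using e \<open>?n \<notin> fst ` Q\<close> \<open>?n \<notin> fst ` Q'\<close>
      by (metis (no_types, lifting) Pair_inject fst_conv image_eqI insertE insert_ident)
  qed
  ultimately have "card ?B = card ?S" by (simp add: card_image)
  also have "\<dots> = (\<Sum>Q\<in>rook_placements b k. card ({1..h} - snd ` Q))"
    by (rule card_SigmaI) (auto simp: finite_rook_placements)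
  also have "\<dots> = (\<Sum>Q\<in>rook_placements b k. h - k)"
  proof (rule sum.cong)
    fix Q assume Q: "Q \<in> rook_placements b k"
    have s: "snd ` Q \<subseteq> {1..h}" "card (snd ` Q) = k" using placement_rows_le[OF Q h] by auto
    have "finite (snd ` Q)" using s(1) by (rule finite_subset) simp
    then show "card ({1..h} - snd ` Q) = h - k" using s by (simp add: card_Diff_subset)
  qed simp
  also have "\<dots> = (h - k) * rook_num b k" by (simp add: rook_num_def)
  finally have "card ?B = (h - k) * rook_num b k" .
  moreover have "card (rook_placements (b@[h]) (Suc k)) = card ?A + card ?B"
  proof -
    have "card (rook_placements (b@[h]) (Suc k)) = card (?A \<union> ?B)" using split by (rule arg_cong)
    also have "\<dots> = card ?A + card ?B" by (rule card_Un_disjoint[OF finA disj])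
    finally show ?thesis .
  qed
  ultimately show ?thesis unfolding rook_num_def A by linarith
qed


fun ff :: "int \<Rightarrow> nat \<Rightarrow> int" where
  "ff x 0 = 1"
| "ff x (Suc m) = ff x m * (x - int m)"

lemma rook_num_snoc_int:
  assumes h: "\<forall>x\<in>set b. x \<le> h"
  shows "int (rook_num (b @ [h]) (Suc k)) = int (rook_num b (Suc k)) + (int h - int k) * int (rook_num b k)"
proof (cases "k \<le> h")
  case True then show ?thesis using rook_num_snoc[OF h, of k] by (simp add: of_nat_diff)
next
  case False
  have "rook_num b k = 0"
  proof (rule ccontr)
    assume "rook_num b k \<noteq> 0"
    then obtain P where P: "P \<in> rook_placements b k"
      by (metis card.empty equals0I rook_num_def)
    have "snd ` P \<subseteq> {1..h}" "card (snd ` P) = k" using placement_rows_le[OF P h] by auto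
    then have "k \<le> h" by (metis card_atLeastAtMost card_mono diff_Suc_1 finite_atLeastAtMost)
    with False show False by simp
  qed
  then show ?thesis using rook_num_snoc[OF h, of k] by simp
qed

lemma rook_identity:
  assumes "sorted b"
  shows "(\<Sum>k\<le>length b. int (rook_num b k) * ff x (length b - k)) = (\<Prod>i<length b. x + int (b!i) - int i)"
  using assms
proof (induction b rule: rev_induct)
  case Nil then show ?case by (simp add: rook_num_0)
next
  case (snoc h b)
  let ?n = "length b"
  let ?r = "\<lambda>k. int (rook_num b k)"
  let ?r' = "\<lambda>k. int (rook_num (b@[h]) k)"
  have sb: "sorted b" and hb: "\<forall>y\<in>set b. y \<le> h" using snoc.prems by (auto simp: sorted_append)
  have IH: "(\<Sum>k\<le>?n. ?r k * ff x (?n - k)) = (\<Prod>i<?n. x + int (b!i) - int i)"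
    using snoc.IH[OF sb] .
  have rN: "?r (Suc ?n) = 0" by (simp add: rook_num_big)
  have E1: "(\<Sum>k\<le>length (b@[h]). ?r' k * ff x (length (b@[h]) - k))
      = ff x (Suc ?n) + (\<Sum>k\<le>?n. ?r (Suc k) * ff x (?n - k) + (int h - int k) * ?r k * ff x (?n - k))"
    by (simp add: sum.atMost_Suc_shift rook_num_0 rook_num_snoc_int[OF hb] algebra_simps del: sum.atMost_Suc)
  have E2: "ff x (Suc ?n) + (\<Sum>k\<le>?n. ?r (Suc k) * ff x (?n - k))
      = (\<Sum>k\<le>?n. ?r k * ff x (?n - k) * (x - int (?n - k)))"
  proof -
    have "ff x (Suc ?n) + (\<Sum>k\<le>?n. ?r (Suc k) * ff x (?n - k))
      = (\<Sum>k\<le>Suc ?n. ?r k * ff x (Suc ?n - k))"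
      by (simp add: sum.atMost_Suc_shift rook_num_0 del: sum.atMost_Suc)
    also have "\<dots> = (\<Sum>k\<le>?n. ?r k * ff x (Suc (?n - k)))"
      by (simp add: rN Suc_diff_le)
    also have "\<dots> = (\<Sum>k\<le>?n. ?r k * ff x (?n - k) * (x - int (?n - k)))"
      by (simp add: mult.assoc)
    finally show ?thesis .
  qed
  have E3: "(\<Sum>k\<le>?n. ?r k * ff x (?n - k) * (x - int (?n - k)) + (int h - int k) * ?r k * ff x (?n - k))
     = (\<Sum>k\<le>?n. ?r k * ff x (?n - k)) * (x + int h - int ?n)"
    unfolding sum_distrib_right by (rule sum.cong) (auto simp: of_nat_diff algebra_simps)
  have "(\<Sum>k\<le>length (b@[h]). ?r' k * ff x (length (b@[h]) - k))
     = (\<Sum>k\<le>?n. ?r k * ff x (?n - k) * (x - int (?n - k)) + (int h - int k) * ?r k * ff x (?n - k))"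
    unfolding E1 sum.distrib E2[symmetric] by simp
  also have "\<dots> = (\<Prod>i<?n. x + int (b!i) - int i) * (x + int h - int ?n)"
    unfolding E3 IH ..
  also have "\<dots> = (\<Prod>i<length (b@[h]). x + int ((b@[h])!i) - int i)"
    by (simp add: nth_append)
  finally show ?case .
qed


lemma cells_Cons0: "cells (0 # b) = (\<lambda>(i,j). (Suc i, j)) ` cells b"
proof (intro equalityI subsetI)
  fix c assume "c \<in> cells (0 # b)"
  then obtain i j where c: "c = (i,j)" "i < Suc (length b)" "1 \<le> j" "j \<le> (0#b) ! i"
    by (auto simp: cells_def)
  then obtain i' where "i = Suc i'" by (cases i) auto
  then show "c \<in> (\<lambda>(i,j). (Suc i, j)) ` cells b" using c
    by (intro image_eqI[where x="(i',j)"]) (auto simp: cells_def)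
qed (auto simp: cells_def)

lemma rook_num_Cons0: "rook_num (0 # b) k = rook_num b k"
proof -
  let ?s = "\<lambda>(i::nat,j::nat). (Suc i, j)"
  have injs: "inj ?s" by (auto simp: inj_def)
  have "rook_placements (0 # b) k = (image ?s) ` rook_placements b k"
  proof (intro equalityI subsetI)
    fix P assume P: "P \<in> rook_placements (0 # b) k"
    define Q where "Q = {e \<in> cells b. ?s e \<in> P}"
    have Ps: "P \<subseteq> ?s ` cells b" using P by (simp add: rook_placements_def cells_Cons0)
    have sQ: "?s ` Q = P" using Ps unfolding Q_def by blast
    have Qc: "Q \<subseteq> cells b" unfolding Q_def by blast
    have iP: "inj_on fst P" "inj_on snd P" "card P = k" using P by (auto simp: rook_placements_def)
    have "card Q = k" using iP(3) sQ card_image[OF inj_on_subset[OF injs subset_UNIV, of Q]] by simp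
    moreover have "inj_on fst Q"
    proof (rule inj_onI)
      fix e e' assume "e \<in> Q" "e' \<in> Q" "fst e = fst e'"
      then have "?s e \<in> P" "?s e' \<in> P" "fst (?s e) = fst (?s e')" unfolding Q_def by (auto split: prod.splits)
      then have "?s e = ?s e'" using iP(1) by (simp add: inj_on_eq_iff)
      then show "e = e'" using injs by (simp add: inj_eq)
    qed
    moreover have "inj_on snd Q"
    proof (rule inj_onI)
      fix e e' assume "e \<in> Q" "e' \<in> Q" "snd e = snd e'"
      then have "?s e \<in> P" "?s e' \<in> P" "snd (?s e) = snd (?s e')" unfolding Q_def by (auto split: prod.splits)
      then have "?s e = ?s e'" using iP(2) by (simp add: inj_on_eq_iff)
      then show "e = e'" using injs by (simp add: inj_eq)
    qed
    ultimately have "Q \<in> rook_placements b k" using Qc by (simp add: rook_placements_def)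
    then show "P \<in> (image ?s) ` rook_placements b k" using sQ by blast
  next
    fix P assume "P \<in> (image ?s) ` rook_placements b k"
    then obtain Q where Q: "Q \<in> rook_placements b k" and P: "P = ?s ` Q" by auto
    have iQ: "inj_on fst Q" "inj_on snd Q" using Q by (auto simp: rook_placements_def)
    have "P \<subseteq> cells (0 # b)" using Q P by (auto simp: rook_placements_def cells_Cons0)
    moreover have "card P = k" using Q P card_image[OF inj_on_subset[OF injs]]
      by (simp add: rook_placements_def)
    moreover have "inj_on fst P"
    proof (rule inj_onI)
      fix d d' assume d: "d \<in> P" "d' \<in> P" "fst d = fst d'"
      obtain e where e: "e \<in> Q" "d = ?s e" using d(1) P by blast
      obtain e' where e': "e' \<in> Q" "d' = ?s e'" using d(2) P by blast
      have "fst e = fst e'" using d(3) e(2) e'(2) by (cases e, cases e') simp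
      then have "e = e'" using iQ(1) e(1) e'(1) by (simp add: inj_on_eq_iff)
      then show "d = d'" using e e' by simp
    qed
    moreover have "inj_on snd P"
    proof (rule inj_onI)
      fix d d' assume d: "d \<in> P" "d' \<in> P" "snd d = snd d'"
      obtain e where e: "e \<in> Q" "d = ?s e" using d(1) P by blast
      obtain e' where e': "e' \<in> Q" "d' = ?s e'" using d(2) P by blast
      have "snd e = snd e'" using d(3) e(2) e'(2) by (cases e, cases e') simp
      then have "e = e'" using iQ(2) e(1) e'(1) by (simp add: inj_on_eq_iff)
      then show "d = d'" using e e' by simp
    qed
    ultimately show "P \<in> rook_placements (0 # b) k" by (simp add: rook_placements_def)
  qed
  moreover have "inj_on (image ?s) (rook_placements b k)"
    using injs by (simp add: inj_on_def inj_image_eq_iff)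
  ultimately show ?thesis by (simp add: rook_num_def card_image)
qed

lemma rook_num_rep0: "rook_num (replicate d 0 @ b) k = rook_num b k"
  by (induction d) (simp_all add: rook_num_Cons0)

lemma rook_num_pad: "rook_num (pad n b) k = rook_num b k"
  by (simp add: pad_def rook_num_rep0)

definition cv :: "nat list \<Rightarrow> int list" where
  "cv b = map (\<lambda>i. int (b!i) - int i) [0..<length b]"

lemma length_cv[simp]: "length (cv b) = length b" by (simp add: cv_def)
lemma nth_cv[simp]: "i < length b \<Longrightarrow> cv b ! i = int (b!i) - int i" by (simp add: cv_def)

lemma prod_cv: "(\<Prod>i<length b. x + int (b!i) - int i) = prod_list (map (\<lambda>c. x + c) (cv b))"
proof -
  have "prod_list (map (\<lambda>c. x + c) (cv b)) = (\<Prod>i\<leftarrow>[0..<length b]. x + (int (b!i) - int i))"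
    by (simp add: cv_def comp_def)
  also have "\<dots> = (\<Prod>i<length b. x + int (b!i) - int i)"
    by (simp add: prod.distinct_set_conv_list[symmetric] atLeast0LessThan algebra_simps)
  finally show ?thesis by simp
qed

lemma mset_prod_eq:
  fixes A B :: "int multiset"
  assumes "(\<Prod>c\<in>#A. [:c, 1:]) = (\<Prod>c\<in>#B. [:c, 1:])"
  shows "A = B"
  using assms
proof (induction A arbitrary: B)
  case empty
  then have "degree (\<Prod>c\<in>#B. [:c, 1:]) = 0" by simp
  moreover have "degree (\<Prod>c\<in>#B. [:c, 1:]) = size B"
  proof (induction B)
    case (add x B)
    have "(\<Prod>c\<in>#B. [:c, 1::int:]) \<noteq> 0" by (auto simp: prod_mset_zero_iff)
    have "[:x, 1::int:] \<noteq> 0" by simp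
    then show ?case using add.IH \<open>(\<Prod>c\<in>#B. [:c, 1::int:]) \<noteq> 0\<close>
      by (simp add: degree_mult_eq del: mult_pCons_left)
  qed simp
  ultimately show ?case by simp
next
  case (add a A)
  have "poly (\<Prod>c\<in>#B. [:c, 1:]) (-a) = 0"
    using add.prems[symmetric] by (simp add: poly_prod_mset)
  then have "0 \<in># image_mset (\<lambda>c. c - a) B" by (simp add: poly_prod_mset prod_mset_zero_iff)
  then have aB: "a \<in># B" by force
  then obtain B' where B: "B = add_mset a B'" by (metis multi_member_split)
  have "[:a,1:] * (\<Prod>c\<in>#A. [:c, 1:]) = [:a,1:] * (\<Prod>c\<in>#B'. [:c, 1:])"
    using add.prems B by simp
  moreover have "[:a,1::int:] \<noteq> 0" by simp
  ultimately have "(\<Prod>c\<in>#A. [:c, 1:]) = (\<Prod>c\<in>#B'. [:c, 1:])"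
    using mult_left_cancel by blast
  then show ?case using add.IH B by simp
qed

lemma mset_eq_from_prod:
  fixes u w :: "int list"
  assumes "\<And>x. prod_list (map (\<lambda>c. x + c) u) = prod_list (map (\<lambda>c. x + c) w)"
  shows "mset u = mset w"
proof -
  have "poly (\<Prod>c\<in>#mset u. [:c, 1:]) = poly (\<Prod>c\<in>#mset w. [:c, 1:])"
  proof
    fix x
    have "poly (\<Prod>c\<in>#mset u. [:c, 1:]) x = prod_list (map (\<lambda>c. x + c) u)"
      by (simp add: poly_prod_mset add.commute, metis mset_map prod_mset_prod_list)
    also have "\<dots> = prod_list (map (\<lambda>c. x + c) w)" by (rule assms)
    also have "\<dots> = poly (\<Prod>c\<in>#mset w. [:c, 1:]) x"
      by (simp add: poly_prod_mset add.commute, metis mset_map prod_mset_prod_list)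
    finally show "poly (\<Prod>c\<in>#mset u. [:c, 1:]) x = poly (\<Prod>c\<in>#mset w. [:c, 1:]) x" .
  qed
  then show ?thesis by (intro mset_prod_eq) (simp add: poly_eq_poly_eq_iff)
qed

lemma prod_from_mset_eq:
  fixes u w :: "int list"
  assumes "mset u = mset w"
  shows "prod_list (map (\<lambda>c. x + c) u) = prod_list (map (\<lambda>c. x + c) w)"
  by (metis assms mset_map prod_mset_prod_list)


lemma ff_zero: "t < m \<Longrightarrow> ff (int t) m = 0"
proof (induction m)
  case (Suc m)
  then show ?case by (cases "t < m") auto
qed simp

lemma ff_pos: assumes "m \<le> t" shows "ff (int t) m > 0"
  using assms
proof (induction m)
  case (Suc m)
  then have "ff (int t) m > 0" "int t - int m > 0" by auto
  then show ?case by simp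
qed simp

lemma ff_basis:
  fixes d :: "nat \<Rightarrow> int"
  assumes "\<And>x. (\<Sum>m\<le>n. d m * ff x m) = 0"
  shows "m \<le> n \<Longrightarrow> d m = 0"
proof (induction m rule: less_induct)
  case (less m)
  have e1: "(\<Sum>j\<le>n. d j * ff (int m) j) = d m * ff (int m) m + (\<Sum>j\<in>{..n} - {m}. d j * ff (int m) j)"
    using less.prems by (subst sum.remove[of _ m]) auto
  have e2: "(\<Sum>j\<in>{..n} - {m}. d j * ff (int m) j) = 0"
  proof (rule sum.neutral, intro ballI)
    fix j assume j: "j \<in> {..n} - {m}"
    show "d j * ff (int m) j = 0"
    proof (cases "j < m")
      case True then show ?thesis using less.IH[of j] less.prems by simp
    next
      case False then have "m < j" using j by simp
      then show ?thesis by (simp add: ff_zero)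
    qed
  qed
  have "d m * ff (int m) m = 0" using assms[of "int m"] e1 e2 by simp
  moreover have "ff (int m) m \<noteq> 0" using ff_pos[of m m] by simp
  ultimately show ?case by simp
qed

lemma coeff_ext:
  fixes a a' :: "nat \<Rightarrow> int"
  assumes "\<And>x. (\<Sum>k\<le>n. a k * ff x (n - k)) = (\<Sum>k\<le>n. a' k * ff x (n - k))"
  shows "k \<le> n \<Longrightarrow> a k = a' k"
proof -
  assume k: "k \<le> n"
  define d where "d m = a (n - m) - a' (n - m)" for m
  have "\<And>x. (\<Sum>m\<le>n. d m * ff x m) = 0"
  proof -
    fix x
    have "(\<Sum>m\<le>n. d m * ff x m) = (\<Sum>m\<in>{0..n}. d m * ff x m)" by (simp add: atLeast0AtMost)
    also have "\<dots> = (\<Sum>k\<in>{0..n}. d (n - k) * ff x (n - k))"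
      by (subst sum.atLeastAtMost_rev) simp
    also have "\<dots> = (\<Sum>k\<in>{0..n}. a k * ff x (n - k) - a' k * ff x (n - k))"
      by (rule sum.cong) (auto simp: d_def algebra_simps)
    also have "\<dots> = 0" using assms[of x] by (simp add: sum_subtractf atLeast0AtMost)
    finally show "(\<Sum>m\<le>n. d m * ff x m) = 0" .
  qed
  then have "d (n - k) = 0" by (rule ff_basis) simp
  then show ?thesis using k by (simp add: d_def)
qed

lemma sorted_pad: "sorted b \<Longrightarrow> sorted (pad n b)"
  by (auto simp: pad_def sorted_append)

lemma length_pad: "length b \<le> n \<Longrightarrow> length (pad n b) = n"
  by (simp add: pad_def)

lemma identity_pad:
  assumes "sorted b" "length b \<le> n"
  shows "(\<Sum>k\<le>n. int (rook_num b k) * ff x (n - k)) = prod_list (map (\<lambda>c. x + c) (cv (pad n b)))"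
proof -
  have l: "length (pad n b) = n" using length_pad[OF assms(2)] .
  have "(\<Sum>k\<le>n. int (rook_num b k) * ff x (n - k)) = (\<Prod>i<length (pad n b). x + int (pad n b!i) - int i)"
    using rook_identity[OF sorted_pad[OF assms(1), of n], where x=x] l by (simp add: rook_num_pad)
  then show ?thesis by (simp only: prod_cv)
qed

lemma rook_equiv_imp_mset:
  assumes "sorted b1" "sorted b2" "length b1 \<le> n" "length b2 \<le> n" "rook_equiv b1 b2"
  shows "mset (cv (pad n b1)) = mset (cv (pad n b2))"
proof (rule mset_eq_from_prod)
  fix x
  show "prod_list (map (\<lambda>c. x + c) (cv (pad n b1))) = prod_list (map (\<lambda>c. x + c) (cv (pad n b2)))"
    using identity_pad[OF assms(1,3), of x] identity_pad[OF assms(2,4), of x] assms(5)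
    by (simp add: rook_equiv_def)
qed

lemma mset_imp_rook_equiv:
  assumes "sorted b1" "sorted b2" "length b1 \<le> n" "length b2 \<le> n"
    "mset (cv (pad n b1)) = mset (cv (pad n b2))"
  shows "rook_equiv b1 b2"
  unfolding rook_equiv_def
proof
  fix k
  show "rook_num b1 k = rook_num b2 k"
  proof (cases "k \<le> n")
    case True
    have "int (rook_num b1 k) = int (rook_num b2 k)"
    proof (rule coeff_ext[OF _ True])
      fix x
      show "(\<Sum>k\<le>n. int (rook_num b1 k) * ff x (n - k)) = (\<Sum>k\<le>n. int (rook_num b2 k) * ff x (n - k))"
        unfolding identity_pad[OF assms(1,3)] identity_pad[OF assms(2,4)]
        by (rule prod_from_mset_eq[OF assms(5)])
    qed
    then show ?thesis by simp
  next
    case False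
    then show ?thesis using assms(3,4) rook_num_big by simp
  qed
qed


definition dif :: "int list \<Rightarrow> int list \<Rightarrow> nat set" where
  "dif u w = {l. l < length u \<and> u!l \<noteq> w!l}"

lemma dif_sym: "length u = length w \<Longrightarrow> dif u w = dif w u"
  by (auto simp: dif_def)

lemma dif_sub: "dif u w \<subseteq> {..<length u}"
  by (auto simp: dif_def)

lemma finite_dif[simp]: "finite (dif u w)"
  using dif_sub finite_subset by blast

lemma dif_tri: "length u = length x \<Longrightarrow> dif u w \<subseteq> dif u x \<union> dif x w"
  by (auto simp: dif_def)

lemma dif_empty: "length u = length w \<Longrightarrow> dif u w = {} \<Longrightarrow> u = w"
  by (auto simp: dif_def intro: nth_equalityI)

lemma not_dif: "l < length u \<Longrightarrow> l \<notin> dif u w \<Longrightarrow> u!l = w!l"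
  by (auto simp: dif_def)

lemma mset_nth: "mset u = image_mset (nth u) (mset_set {..<length u})"
proof -
  have "mset u = mset (map (nth u) [0..<length u])" by (simp add: map_nth)
  also have "\<dots> = image_mset (nth u) (mset_set {..<length u})"
    by (simp add: mset_upt atLeast0LessThan)
  finally show ?thesis .
qed

lemma restrict_mset:
  assumes "length u = length w" "mset u = mset w" "D \<subseteq> {..<length u}"
    "\<forall>l<length u. l \<notin> D \<longrightarrow> u!l = w!l"
  shows "image_mset (nth u) (mset_set D) = image_mset (nth w) (mset_set D)"
proof -
  let ?n = "length u"
  have split: "mset_set {..<?n} = mset_set D + mset_set ({..<?n} - D)"
  proof -
    have "{..<?n} = D \<union> ({..<?n} - D)" using assms(3) by blast
    then have "mset_set {..<?n} = mset_set (D \<union> ({..<?n} - D))" by simp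
    also have "\<dots> = mset_set D + mset_set ({..<?n} - D)"
      by (rule mset_set_Union) (use assms(3) finite_subset in auto)
    finally show ?thesis .
  qed
  have rest: "image_mset (nth u) (mset_set ({..<?n} - D)) = image_mset (nth w) (mset_set ({..<?n} - D))"
    by (rule image_mset_cong) (use assms(4) in auto)
  have "image_mset (nth u) (mset_set D) + image_mset (nth u) (mset_set ({..<?n} - D))
      = image_mset (nth w) (mset_set D) + image_mset (nth w) (mset_set ({..<?n} - D))"
    using assms(1,2) mset_nth[of u] mset_nth[of w] split by simp
  then show ?thesis using rest by simp
qed

lemma dif_card1:
  assumes "length u = length w" "mset u = mset w" "card (dif u w) = 1"
  shows False
proof -
  obtain i where D: "dif u w = {i}" using assms(3) card_1_singletonE by blast
  have i: "i < length u" "u!i \<noteq> w!i" using D by (auto simp: dif_def)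
  have "image_mset (nth u) (mset_set {i}) = image_mset (nth w) (mset_set {i})"
    by (rule restrict_mset) (use assms(1,2) D i in \<open>auto simp: dif_def\<close>)
  then show False using i by simp
qed

lemma dif_ge3:
  assumes "length u = length w" "mset u = mset w" "u \<noteq> w" "card (dif u w) \<noteq> 2"
  shows "card (dif u w) \<ge> 3"
proof -
  have "card (dif u w) \<noteq> 0" using assms(1,3) dif_empty by fastforce
  moreover have "card (dif u w) \<noteq> 1" using dif_card1[OF assms(1,2)] by blast
  ultimately show ?thesis using assms(4) by linarith
qed

lemma agreeG:
  assumes len: "length x = n" "length y = n" "length y' = n"
    and c: "card (dif x y) + card (dif x y') \<le> card (dif y y') + 1"
    and l: "l < n" "l \<notin> dif y y'"
  shows "x!l = y!l"
proof (rule ccontr)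
  assume ne: "x!l \<noteq> y!l"
  have "y!l = y'!l" using l len by (auto simp: dif_def)
  then have lA: "l \<in> dif x y \<inter> dif x y'" using ne l len by (auto simp: dif_def)
  have t1: "dif y y' \<subseteq> dif y x \<union> dif x y'" by (rule dif_tri) (simp add: len)
  have t2: "dif y x = dif x y" by (rule dif_sym) (simp add: len)
  have sub: "insert l (dif y y') \<subseteq> dif x y \<union> dif x y'"
    using t1 t2 lA by blast
  have "card (insert l (dif y y')) = card (dif y y') + 1" using l by simp
  moreover have "card (insert l (dif y y')) \<le> card (dif x y \<union> dif x y')"
    by (rule card_mono[OF _ sub]) simp
  moreover have "card (dif x y) + card (dif x y') = card (dif x y \<union> dif x y') + card (dif x y \<inter> dif x y')"
    using card_Un_Int[of "dif x y" "dif x y'"] by simp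
  moreover have "card (dif x y \<inter> dif x y') \<ge> 1"
    using lA by (metis One_nat_def Suc_leI card_gt_0_iff empty_iff finite_Int finite_dif)
  ultimately show False using c by linarith
qed

lemma caseA:
  fixes x1 x2 x3 y1 y2 y3 :: "int list"
  assumes len: "length x1 = n" "length x2 = n" "length x3 = n" "length y1 = n" "length y2 = n" "length y3 = n"
    and cr: "card (dif x1 y1) = 2" "card (dif x1 y2) = 2" "card (dif x1 y3) = 2"
            "card (dif x2 y1) = 2" "card (dif x2 y2) = 2" "card (dif x2 y3) = 2"
            "card (dif x3 y1) = 2" "card (dif x3 y2) = 2" "card (dif x3 y3) = 2"
    and x12: "card (dif x1 x2) \<ge> 3"
    and y12: "card (dif y1 y2) = 3"
  shows "\<forall>v\<in>{x1,x2,x3,y1,y2,y3}. \<forall>l<n. l \<notin> dif y1 y2 \<longrightarrow> v!l = y1!l"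
proof -
  let ?D = "dif y1 y2"
  have X: "\<And>x. x \<in> {x1,x2,x3} \<Longrightarrow> \<forall>l<n. l \<notin> ?D \<longrightarrow> x!l = y1!l"
  proof -
    fix x assume "x \<in> {x1,x2,x3}"
    then have "length x = n" "card (dif x y1) = 2" "card (dif x y2) = 2" using len cr by auto
    then show "\<forall>l<n. l \<notin> ?D \<longrightarrow> x!l = y1!l"
      using agreeG[of x n y1 y2] len y12 by auto
  qed
  have Y2: "\<forall>l<n. l \<notin> ?D \<longrightarrow> y2!l = y1!l" using len by (auto simp: dif_def)
  have sub: "dif x1 x2 \<subseteq> ?D"
  proof
    fix l assume l: "l \<in> dif x1 x2"
    then have "l < n" using len by (auto simp: dif_def)
    show "l \<in> ?D"
    proof (rule ccontr)
      assume "l \<notin> ?D"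
      then have "x1!l = y1!l" "x2!l = y1!l" using X \<open>l < n\<close> by auto
      then show False using l by (auto simp: dif_def)
    qed
  qed
  have "card (dif x1 x2) \<le> card ?D" by (rule card_mono) (simp_all add: sub)
  then have eqD: "dif x1 x2 = ?D"
    using card_subset_eq[OF _ sub] x12 y12 by simp
  have Y3: "\<forall>l<n. l \<notin> ?D \<longrightarrow> y3!l = y1!l"
  proof (intro allI impI)
    fix l assume l: "l < n" "l \<notin> ?D"
    have "card (dif y3 x1) = 2" "card (dif y3 x2) = 2"
      using cr dif_sym[of y3 x1] dif_sym[of y3 x2] len by auto
    then have "y3!l = x1!l"
      using agreeG[of y3 n x1 x2 l] len l eqD y12 by auto
    then show "y3!l = y1!l" using X l by auto
  qed
  show ?thesis using X Y2 Y3 by auto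
qed

lemma caseB:
  fixes x1 x2 x3 y1 y2 :: "int list"
  assumes len: "length x1 = n" "length x2 = n" "length x3 = n" "length y1 = n" "length y2 = n"
    and cr: "card (dif x1 y1) = 2" "card (dif x1 y2) = 2"
            "card (dif x2 y1) = 2" "card (dif x2 y2) = 2"
            "card (dif x3 y1) = 2" "card (dif x3 y2) = 2"
    and big: "card (dif x1 x2) \<ge> 4" "card (dif x1 x3) \<ge> 4" "card (dif y1 y2) \<ge> 4"
  shows "x2 = x3"
proof -
  define S1 where "S1 = dif x1 y1"
  define S2 where "S2 = dif x1 y2"
  have t1: "dif y1 y2 \<subseteq> dif y1 x1 \<union> dif x1 y2" by (rule dif_tri) (simp add: len)
  have t2: "dif y1 x1 = dif x1 y1" by (rule dif_sym) (simp add: len)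
  have sub3: "dif y1 y2 \<subseteq> S1 \<union> S2" using t1 t2 unfolding S1_def S2_def by blast
  have finU: "finite (S1 \<union> S2)" by (simp add: S1_def S2_def)
  have "card (S1 \<union> S2) \<le> 4"
    using card_Un_le[of S1 S2] cr unfolding S1_def S2_def by simp
  moreover have "card (dif y1 y2) \<le> card (S1 \<union> S2)" by (rule card_mono[OF finU sub3])
  ultimately have c4: "card (S1 \<union> S2) = 4" using big(3) by linarith
  have eqU: "dif y1 y2 = S1 \<union> S2"
    using card_subset_eq[OF finU sub3] c4 \<open>card (dif y1 y2) \<le> card (S1 \<union> S2)\<close> big(3) by linarith
  have "card (S1 \<union> S2) + card (S1 \<inter> S2) = card S1 + card S2"
    using card_Un_Int[of S1 S2] by (simp add: S1_def S2_def)
  then have "card (S1 \<inter> S2) = 0" using c4 cr unfolding S1_def S2_def by simp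
  then have disj: "S1 \<inter> S2 = {}" by (simp add: S1_def S2_def)
  have key: "\<And>x. length x = n \<Longrightarrow> card (dif x y1) = 2 \<Longrightarrow> card (dif x y2) = 2 \<Longrightarrow> card (dif x1 x) \<ge> 4
      \<Longrightarrow> \<forall>l<n. x!l = (if l \<in> S1 then y1!l else y2!l)"
  proof -
    fix x assume lx: "length x = n" and c1: "card (dif x y1) = 2" and c2: "card (dif x y2) = 2"
      and cx: "card (dif x1 x) \<ge> 4"
    have out: "\<forall>l<n. l \<notin> S1 \<union> S2 \<longrightarrow> x!l = x1!l"
    proof (intro allI impI)
      fix l assume l: "l < n" "l \<notin> S1 \<union> S2"
      then have "x!l = y1!l" using agreeG[of x n y1 y2 l] lx len c1 c2 c4 eqU by auto
      moreover have "y1!l = x1!l" using l len unfolding S1_def by (auto simp: dif_def)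
      ultimately show "x!l = x1!l" by simp
    qed
    have sx: "dif x1 x \<subseteq> S1 \<union> S2"
      using out len lx by (auto simp: dif_def)
    have "card (dif x1 x) \<le> card (S1 \<union> S2)" by (rule card_mono[OF finU sx])
    then have dx: "dif x1 x = S1 \<union> S2"
      using card_subset_eq[OF finU sx] cx c4 by linarith
    have "S1 \<subseteq> dif x y2"
    proof
      fix l assume l: "l \<in> S1"
      have "l \<notin> S2" using disj l by blast
      have "l < n" using l len unfolding S1_def dif_def by auto
      have "y2!l = x1!l" using \<open>l \<notin> S2\<close> \<open>l < n\<close> len unfolding S2_def dif_def by auto
      moreover have "l \<in> dif x1 x" using dx l by blast
      then have "x!l \<noteq> x1!l" by (simp add: dif_def)
      ultimately show "l \<in> dif x y2" using \<open>l < n\<close> lx by (auto simp: dif_def)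
    qed
    then have e2: "dif x y2 = S1"
      using card_subset_eq[of "dif x y2" S1] c2 cr(1) unfolding S1_def by simp
    have "S2 \<subseteq> dif x y1"
    proof
      fix l assume l: "l \<in> S2"
      have "l \<notin> S1" using disj l by blast
      have "l < n" using l len unfolding S2_def dif_def by auto
      have "y1!l = x1!l" using \<open>l \<notin> S1\<close> \<open>l < n\<close> len unfolding S1_def dif_def by auto
      moreover have "l \<in> dif x1 x" using dx l by blast
      then have "x!l \<noteq> x1!l" by (simp add: dif_def)
      ultimately show "l \<in> dif x y1" using \<open>l < n\<close> lx by (auto simp: dif_def)
    qed
    then have e1: "dif x y1 = S2"
      using card_subset_eq[of "dif x y1" S2] c1 cr(2) unfolding S2_def by simp
    show "\<forall>l<n. x!l = (if l \<in> S1 then y1!l else y2!l)"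
    proof (intro allI impI)
      fix l assume l: "l < n"
      show "x!l = (if l \<in> S1 then y1!l else y2!l)"
      proof (cases "l \<in> S1")
        case True then have "l \<notin> dif x y1" using e1 disj by auto
        then show ?thesis using True l lx by (auto simp: dif_def)
      next
        case False then have "l \<notin> dif x y2" using e2 by auto
        then show ?thesis using False l lx by (auto simp: dif_def)
      qed
    qed
  qed
  have "\<forall>l<n. x2!l = (if l \<in> S1 then y1!l else y2!l)" using key[of x2] len cr big by auto
  moreover have "\<forall>l<n. x3!l = (if l \<in> S1 then y1!l else y2!l)" using key[of x3] len cr big by auto
  ultimately show "x2 = x3" using len by (auto intro: nth_equalityI)
qed


definition valid :: "int list \<Rightarrow> bool" where
  "valid c \<longleftrightarrow> (c \<noteq> [] \<longrightarrow> 0 \<le> hd c) \<and> successively (\<lambda>a b. a - 1 \<le> b) c"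

definition perms3 :: "int \<Rightarrow> int \<Rightarrow> int \<Rightarrow> (int \<times> int \<times> int) set" where
  "perms3 a b c = {(a,b,c),(a,c,b),(b,a,c),(b,c,a),(c,a,b),(c,b,a)}"

lemma mset3:
  assumes "{#\<alpha>,\<beta>,\<gamma>#} = {#a,b,c::int#}"
  shows "(\<alpha>,\<beta>,\<gamma>) \<in> perms3 a b c"
  using assms by (auto simp: perms3_def add_eq_conv_ex)

lemma valid_expand:
  assumes "G1 \<noteq> []" "G2 \<noteq> []"
  shows "valid (X1 @ \<alpha> # G1 @ \<beta> # G2 @ \<gamma> # X2) \<longleftrightarrow>
    (X1 = [] \<longrightarrow> 0 \<le> \<alpha>) \<and> (X1 \<noteq> [] \<longrightarrow> 0 \<le> hd X1 \<and> last X1 - 1 \<le> \<alpha>) \<and>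
    successively (\<lambda>a b. a - 1 \<le> b) X1 \<and> \<alpha> - 1 \<le> hd G1 \<and> successively (\<lambda>a b. a - 1 \<le> b) G1 \<and>
    last G1 - 1 \<le> \<beta> \<and> \<beta> - 1 \<le> hd G2 \<and> successively (\<lambda>a b. a - 1 \<le> b) G2 \<and>
    last G2 - 1 \<le> \<gamma> \<and> (X2 \<noteq> [] \<longrightarrow> \<gamma> - 1 \<le> hd X2) \<and> successively (\<lambda>a b. a - 1 \<le> b) X2"
  using assms by (cases X1; cases X2) (auto simp: valid_def successively_append_iff successively_Cons)

lemma valid_expand2:
  assumes "G1 \<noteq> []" "G2 \<noteq> []"
  shows "valid (X1 @ A # G1 @ G2 @ B # C # X2) \<longleftrightarrow>
    (X1 = [] \<longrightarrow> 0 \<le> A) \<and> (X1 \<noteq> [] \<longrightarrow> 0 \<le> hd X1 \<and> last X1 - 1 \<le> A) \<and>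
    successively (\<lambda>a b. a - 1 \<le> b) X1 \<and> A - 1 \<le> hd G1 \<and> successively (\<lambda>a b. a - 1 \<le> b) G1 \<and>
    last G1 - 1 \<le> hd G2 \<and> successively (\<lambda>a b. a - 1 \<le> b) G2 \<and>
    last G2 - 1 \<le> B \<and> B - 1 \<le> C \<and> (X2 \<noteq> [] \<longrightarrow> C - 1 \<le> hd X2) \<and> successively (\<lambda>a b. a - 1 \<le> b) X2"
  using assms by (cases X1; cases X2) (auto simp: valid_def successively_append_iff successively_Cons)

lemma valid_G_nonempty:
  assumes "x < y" "y < z" "valid (X1 @ z # G1 @ x # G2 @ y # X2)" "valid (X1 @ y # G1 @ z # G2 @ x # X2)"
  shows "G1 \<noteq> []" "G2 \<noteq> []"
proof -
  show "G1 \<noteq> []"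
  proof
    assume "G1 = []"
    then have "successively (\<lambda>a b. a - 1 \<le> b) (z # x # G2 @ y # X2)"
      using assms(3) by (simp add: valid_def successively_append_iff)
    then show False using assms(1,2) by (simp add: successively_Cons)
  qed
  show "G2 \<noteq> []"
  proof
    assume "G2 = []"
    then have "successively (\<lambda>a b. a - 1 \<le> b) ((X1 @ y # G1) @ [z, x] @ X2)"
      using assms(4) by (simp add: valid_def)
    then have "successively (\<lambda>a b. a - 1 \<le> b) ([z, x] @ X2)"
      by (simp only: successively_append_iff)
    then show False using assms(1,2) by (simp add: successively_Cons)
  qed
qed

lemma CL:
  fixes x y z :: int
  assumes xyz: "x < y" "y < z"
    and V: "\<And>\<alpha> \<beta> \<gamma>. (\<alpha>,\<beta>,\<gamma>) \<in> perms3 x y z \<Longrightarrow> valid (X1 @ \<alpha> # G1 @ \<beta> # G2 @ \<gamma> # X2)"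
  shows "G1 \<noteq> [] \<and> G2 \<noteq> [] \<and> (\<exists>A B C. (A,B,C) \<in> perms3 x y z \<and> B \<noteq> last G2 \<and>
           valid (X1 @ A # G1 @ G2 @ B # C # X2))"
proof -
  have ne: "G1 \<noteq> []" "G2 \<noteq> []"
    using valid_G_nonempty[OF xyz V V] by (auto simp: perms3_def)
  note VE = valid_expand[OF ne]
  have v: "valid (X1 @ \<alpha> # G1 @ \<beta> # G2 @ \<gamma> # X2)" if "(\<alpha>,\<beta>,\<gamma>) \<in> perms3 x y z" for \<alpha> \<beta> \<gamma>
    using V that by blast
  have p: "(x,y,z) \<in> perms3 x y z" "(x,z,y) \<in> perms3 x y z" "(y,x,z) \<in> perms3 x y z"
    "(y,z,x) \<in> perms3 x y z" "(z,x,y) \<in> perms3 x y z" "(z,y,x) \<in> perms3 x y z"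
    by (auto simp: perms3_def)
  have f1: "last G1 - 1 \<le> x" using v[OF p(5)] unfolding VE by simp
  have f2: "z - 1 \<le> hd G2" using v[OF p(2)] unfolding VE by simp
  have mid: "last G1 - 1 \<le> hd G2" using f1 f2 xyz by linarith
  show ?thesis
  proof (cases "last G2 = x")
    case False
    have "valid (X1 @ z # G1 @ G2 @ x # y # X2)"
      unfolding valid_expand2[OF ne] using v[OF p(5)] v[OF p(6)] mid xyz unfolding VE by auto
    then show ?thesis using ne False p(5) by blast
  next
    case True
    have "valid (X1 @ x # G1 @ G2 @ y # z # X2)"
      unfolding valid_expand2[OF ne] using v[OF p(1)] v[OF p(2)] mid xyz unfolding VE by auto
    then show ?thesis using ne True xyz p(1) by auto
  qed
qed


definition Wset :: "nat \<Rightarrow> int multiset \<Rightarrow> int list set" where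
  "Wset n M = {c. length c = n \<and> mset c = M \<and> valid c}"

lemma sort3:
  fixes a b c :: int
  assumes "a \<noteq> b" "a \<noteq> c" "b \<noteq> c"
  shows "\<exists>x y z. x < y \<and> y < z \<and> perms3 a b c = perms3 x y z"
proof -
  have sym: "perms3 a b c = perms3 a c b" "perms3 a b c = perms3 b a c" "perms3 a b c = perms3 b c a"
    "perms3 a b c = perms3 c a b" "perms3 a b c = perms3 c b a" by (auto simp: perms3_def)
  show ?thesis
  proof (cases a b rule: linorder_cases)
    case less
    then show ?thesis
    proof (cases b c rule: linorder_cases)
      case less then show ?thesis using \<open>a < b\<close> by blast
    next
      case equal then show ?thesis using assms by simp
    next
      case greater
      then show ?thesis
      proof (cases a c rule: linorder_cases)
        case less then show ?thesis using \<open>c < b\<close> sym(1) by blast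
      next
        case equal then show ?thesis using assms by simp
      next
        case greater then show ?thesis using \<open>a < b\<close> sym(4) by blast
      qed
    qed
  next
    case equal then show ?thesis using assms by simp
  next
    case greater
    then show ?thesis
    proof (cases a c rule: linorder_cases)
      case less then show ?thesis using \<open>b < a\<close> sym(2) by blast
    next
      case equal then show ?thesis using assms by simp
    next
      case greater
      then show ?thesis
      proof (cases b c rule: linorder_cases)
        case less then show ?thesis using \<open>c < a\<close> sym(3) by blast
      next
        case equal then show ?thesis using assms by simp
      next
        case greater then show ?thesis using \<open>b < a\<close> sym(5) by blast
      qed
    qed
  qed
qed

lemma split3:
  assumes "p < q" "q < r" "r < length u"
  shows "\<exists>X1 G1 G2 X2. u = X1 @ u!p # G1 @ u!q # G2 @ u!r # X2 \<and> length X1 = p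
           \<and> q = Suc (p + length G1) \<and> r = Suc (q + length G2)"
proof -
  define A where "A = take r u"
  have u: "u = A @ u!r # drop (Suc r) u" using assms(3) unfolding A_def by (rule id_take_nth_drop)
  have lA: "length A = r" using assms(3) by (simp add: A_def)
  have A: "A = take q A @ u!q # drop (Suc q) A"
    using id_take_nth_drop[of q A] assms lA by (simp add: A_def)
  define B where "B = take q A"
  have lB: "length B = q" using assms lA by (simp add: B_def)
  have B: "B = take p B @ u!p # drop (Suc p) B"
    using id_take_nth_drop[of p B] assms lB by (simp add: B_def A_def)
  have "u = take p B @ u!p # drop (Suc p) B @ u!q # drop (Suc q) A @ u!r # drop (Suc r) u"
    using u A B unfolding B_def by (metis append.assoc append_Cons)
  moreover have "length (take p B) = p" using lB assms by simp
  moreover have "q = Suc (p + length (drop (Suc p) B))" using lB assms by simp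
  moreover have "r = Suc (q + length (drop (Suc q) A))" using lA assms by simp
  ultimately show ?thesis by blast
qed

lemma card_perms3: "card (perms3 a b c) \<le> 6"
proof -
  have "perms3 a b c = set [(a,b,c),(a,c,b),(b,a,c),(b,c,a),(c,a,b),(c,b,a)]" by (simp add: perms3_def)
  then have "card (perms3 a b c) \<le> length [(a,b,c),(a,c,b),(b,a,c),(b,c,a),(c,a,b),(c,b,a)]"
    using card_length by metis
  then show ?thesis by simp
qed

lemma card_set3: "card (set [u,v,w::int\<times>int\<times>int]) \<le> 3"
proof -
  have "card (set [u,v,w]) \<le> length [u,v,w]" by (rule card_length)
  then show ?thesis by simp
qed

lemma card_perms3_nd:
  assumes "a = b \<or> a = c \<or> b = c"
  shows "card (perms3 a b c) \<le> 3"
proof -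
  obtain u v w where h: "perms3 a b c \<subseteq> set [u,v,w]"
  proof -
    consider "a = b" | "a = c" | "b = c" using assms by blast
    then show ?thesis
    proof cases
      case 1 then show ?thesis using that[of "(a,b,c)" "(a,c,b)" "(c,a,b)"] by (auto simp: perms3_def)
    next
      case 2 then show ?thesis using that[of "(a,b,c)" "(a,c,b)" "(b,a,c)"] by (auto simp: perms3_def)
    next
      case 3 then show ?thesis using that[of "(a,b,c)" "(b,a,c)" "(b,c,a)"] by (auto simp: perms3_def)
    qed
  qed
  have "card (perms3 a b c) \<le> card (set [u,v,w])" by (rule card_mono[OF _ h]) simp
  then show ?thesis using card_set3[of u v w] by linarith
qed


lemma nat3:
  fixes a b c :: nat
  assumes "a \<noteq> b" "a \<noteq> c" "b \<noteq> c"
  shows "\<exists>p q r. p < q \<and> q < r \<and> {a,b,c} = {p,q,r}"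
proof -
  have s: "{a,b,c} = {a,c,b}" "{a,b,c} = {b,a,c}" "{a,b,c} = {b,c,a}" "{a,b,c} = {c,a,b}" "{a,b,c} = {c,b,a}"
    by auto
  consider "a < b" "b < c" | "a < c" "c < b" | "b < a" "a < c" | "b < c" "c < a" | "c < a" "a < b" | "c < b" "b < a"
    using assms by linarith
  then show ?thesis
  proof cases
    case 1 then show ?thesis by blast
  next
    case 2 then show ?thesis using s(1) by blast
  next
    case 3 then show ?thesis using s(2) by blast
  next
    case 4 then show ?thesis using s(3) by blast
  next
    case 5 then show ?thesis using s(4) by blast
  next
    case 6 then show ?thesis using s(5) by blast
  qed
qed

lemma finite_perms3: "finite (perms3 a b c)" by (simp add: perms3_def)

lemma caseA_final:
  fixes g :: "nat \<Rightarrow> int list"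
  assumes gW: "\<And>i. i < 6 \<Longrightarrow> g i \<in> Wset n M"
    and Wg: "\<And>c. c \<in> Wset n M \<Longrightarrow> \<exists>i<6. c = g i"
    and inj: "inj_on g {..<6}"
    and u0: "u0 \<in> Wset n M"
    and D: "card D = 3" "D \<subseteq> {..<n}"
    and agree: "\<And>i l. i < 6 \<Longrightarrow> l < n \<Longrightarrow> l \<notin> D \<Longrightarrow> g i ! l = u0 ! l"
  shows False
proof -
  obtain a b c where "D = {a,b,c}" "a \<noteq> b" "b \<noteq> c" "a \<noteq> c" using D(1) unfolding card_3_iff by blast
  then obtain p q r where pqr: "D = {p,q,r}" "p < q" "q < r" using nat3 by metis
  have rn: "r < n" using D(2) pqr by auto
  have u0W: "length u0 = n" "mset u0 = M" "valid u0" using u0 by (auto simp: Wset_def)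
  obtain X1 G1 G2 X2 where u0s: "u0 = X1 @ u0!p # G1 @ u0!q # G2 @ u0!r # X2" "length X1 = p"
    "q = Suc (p + length G1)" "r = Suc (q + length G2)"
    using split3[OF pqr(2,3)] rn u0W(1) by metis
  define a1 where "a1 = u0!p"
  define a2 where "a2 = u0!q"
  define a3 where "a3 = u0!r"
  define F where "F = (\<lambda>(\<alpha>,\<beta>,\<gamma>). X1 @ \<alpha> # G1 @ \<beta> # G2 @ \<gamma> # X2)"
  have F_upd: "F (\<alpha>,\<beta>,\<gamma>) = u0[p:=\<alpha>, q:=\<beta>, r:=\<gamma>]" for \<alpha> \<beta> \<gamma>
  proof -
    have "u0[p:=\<alpha>, q:=\<beta>, r:=\<gamma>] = (X1 @ u0!p # G1 @ u0!q # G2 @ u0!r # X2)[p:=\<alpha>, q:=\<beta>, r:=\<gamma>]"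
      using u0s(1) by simp
    also have "\<dots> = X1 @ \<alpha> # G1 @ \<beta> # G2 @ \<gamma> # X2"
      using u0s(2-4) by (simp add: list_update_append)
    finally show ?thesis by (simp add: F_def)
  qed
  have inP: "(u!p,u!q,u!r) \<in> perms3 a1 a2 a3 \<and> u = F (u!p,u!q,u!r)"
    if uW: "u \<in> Wset n M" and ua: "\<forall>l<n. l \<notin> D \<longrightarrow> u!l = u0!l" for u
  proof
    have lu: "length u = n" "mset u = M" using uW by (auto simp: Wset_def)
    have "image_mset (nth u) (mset_set D) = image_mset (nth u0) (mset_set D)"
      by (rule restrict_mset) (use lu u0W D(2) ua in auto)
    then have "{#u!p,u!q,u!r#} = {#a1,a2,a3#}"
      using pqr by (simp add: a1_def a2_def a3_def)
    then show "(u!p,u!q,u!r) \<in> perms3 a1 a2 a3" by (rule mset3)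
    show "u = F (u!p,u!q,u!r)"
      unfolding F_upd
    proof (rule nth_equalityI)
      show "length u = length (u0[p := u ! p, q := u ! q, r := u ! r])" using lu u0W by simp
      fix l assume "l < length u"
      then show "u ! l = u0[p := u ! p, q := u ! q, r := u ! r] ! l"
        using ua lu u0W pqr rn by (auto simp: nth_list_update)
    qed
  qed
  have sub: "g ` {..<6} \<subseteq> F ` perms3 a1 a2 a3"
  proof
    fix v assume "v \<in> g ` {..<6}"
    then obtain i where i: "i < 6" "v = g i" by auto
    have "(v!p,v!q,v!r) \<in> perms3 a1 a2 a3 \<and> v = F (v!p,v!q,v!r)"
      using inP[of v] gW[OF i(1)] agree[OF i(1)] i(2) by blast
    then show "v \<in> F ` perms3 a1 a2 a3" by blast
  qed
  have c6: "card (g ` {..<6}) = 6" using inj by (simp add: card_image)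
  have "card (F ` perms3 a1 a2 a3) \<le> card (perms3 a1 a2 a3)" by (rule card_image_le) (simp add: finite_perms3)
  moreover have "card (g ` {..<6}) \<le> card (F ` perms3 a1 a2 a3)"
    by (rule card_mono[OF _ sub]) (simp add: finite_perms3)
  ultimately have cp: "card (perms3 a1 a2 a3) \<ge> 6" "card (F ` perms3 a1 a2 a3) = 6"
    using c6 card_perms3[of a1 a2 a3] by linarith+
  have dist: "a1 \<noteq> a2" "a1 \<noteq> a3" "a2 \<noteq> a3" using cp(1) card_perms3_nd[of a1 a2 a3] by auto
  have eq: "g ` {..<6} = F ` perms3 a1 a2 a3"
    using card_subset_eq[OF _ sub] cp(2) c6 by (simp add: finite_perms3)
  have Vall: "F t \<in> Wset n M" if "t \<in> perms3 a1 a2 a3" for t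
  proof -
    have "F t \<in> g ` {..<6}" using that eq by (metis imageI)
    then obtain i where "i < 6" "F t = g i" by auto
    then show ?thesis using gW by simp
  qed
  obtain x y z where xyz: "x < y" "y < z" "perms3 a1 a2 a3 = perms3 x y z"
    using sort3[OF dist] by blast
  have V: "valid (X1 @ \<alpha> # G1 @ \<beta> # G2 @ \<gamma> # X2)" if "(\<alpha>,\<beta>,\<gamma>) \<in> perms3 x y z" for \<alpha> \<beta> \<gamma>
    using Vall[of "(\<alpha>,\<beta>,\<gamma>)"] that xyz(3) by (simp add: F_def Wset_def)
  obtain A B C where ne: "G1 \<noteq> []" "G2 \<noteq> []" and ABC: "(A,B,C) \<in> perms3 x y z" "B \<noteq> last G2"
      and vn: "valid (X1 @ A # G1 @ G2 @ B # C # X2)"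
    using CL[OF xyz(1,2) V] by blast
  let ?new = "X1 @ A # G1 @ G2 @ B # C # X2"
  have FW: "F (A,B,C) \<in> Wset n M" using Vall ABC(1) xyz(3) by simp
  have "length ?new = n" "mset ?new = M"
    using FW by (auto simp: F_def Wset_def)
  then have "?new \<in> Wset n M" using vn by (simp add: Wset_def)
  then obtain i where i: "i < 6" "?new = g i" using Wg by blast
  define l where "l = q + length G2"
  have l: "l < n" "l \<notin> D" using ne(2) pqr u0s(4) rn unfolding l_def by auto
  have "?new ! l = u0 ! l" using agree[OF i(1) l] i(2) by simp
  moreover have "?new ! l = B"
  proof -
    have "?new = (X1 @ A # G1 @ G2) @ B # C # X2" by simp
    moreover have "length (X1 @ A # G1 @ G2) = l" using u0s(2,3) unfolding l_def by simp
    ultimately show ?thesis by (metis nth_append_length)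
  qed
  moreover have "u0 ! l = last G2"
  proof -
    have "u0 = (X1 @ u0!p # G1 @ u0!q # butlast G2) @ last G2 # u0!r # X2"
      using u0s(1) ne(2) by (metis append.assoc append_Cons append_Nil append_butlast_last_id)
    moreover have "length (X1 @ u0!p # G1 @ u0!q # butlast G2) = l"
      using u0s(2,3) ne(2) unfolding l_def by (cases G2) auto
    ultimately show ?thesis by (metis nth_append_length)
  qed
  ultimately show False using ABC(2) by simp
qed


theorem no_K33_abstract:
  fixes g :: "nat \<Rightarrow> int list"
  assumes gW: "\<And>i. i < 6 \<Longrightarrow> g i \<in> Wset n M"
    and Wg: "\<And>c. c \<in> Wset n M \<Longrightarrow> \<exists>i<6. c = g i"
    and inj: "inj_on g {..<6}"
    and E: "\<And>i j. i < 6 \<Longrightarrow> j < 6 \<Longrightarrow> card (dif (g i) (g j)) = 2 \<longleftrightarrow> (i < 3 \<longleftrightarrow> 3 \<le> j)"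
  shows False
proof -
  have len: "length (g i) = n" "mset (g i) = M" if "i < 6" for i
    using gW[OF that] by (auto simp: Wset_def)
  have ge3: "card (dif (g i) (g j)) \<ge> 3" if "i < 6" "j < 6" "i \<noteq> j" "(i < 3 \<longleftrightarrow> j < 3)" for i j
  proof (rule dif_ge3)
    show "length (g i) = length (g j)" "mset (g i) = mset (g j)" using len that by auto
    show "g i \<noteq> g j" using inj that by (auto simp: inj_on_def)
    show "card (dif (g i) (g j)) \<noteq> 2" using E[of i j] that by auto
  qed
  have cr: "card (dif (g i) (g j)) = 2" if "i < 6" "j < 6" "(i < 3 \<longleftrightarrow> 3 \<le> j)" for i j
    using E[of i j] that by auto
  have less6: "i' = 0 \<or> i' = 1 \<or> i' = 2 \<or> i' = 3 \<or> i' = 4 \<or> i' = 5" if "i' < (6::nat)" for i'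
    using that by presburger
  have A: False if idx: "\<And>i'. i' < 6 \<Longrightarrow> i' \<in> {i,j,k,a,b,c}" "i < 6" "j < 6" "k < 6" "a < 6" "b < 6" "c < 6"
      and crs: "card (dif (g a) (g i)) = 2" "card (dif (g a) (g j)) = 2" "card (dif (g a) (g k)) = 2"
        "card (dif (g b) (g i)) = 2" "card (dif (g b) (g j)) = 2" "card (dif (g b) (g k)) = 2"
        "card (dif (g c) (g i)) = 2" "card (dif (g c) (g j)) = 2" "card (dif (g c) (g k)) = 2"
      and ab: "card (dif (g a) (g b)) \<ge> 3"
      and ij: "card (dif (g i) (g j)) = 3" for i j k a b c
  proof -
    have ag: "\<forall>v\<in>{g a, g b, g c, g i, g j, g k}. \<forall>l<n. l \<notin> dif (g i) (g j) \<longrightarrow> v!l = g i!l"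
      by (rule caseA[OF len(1)[OF idx(5)] len(1)[OF idx(6)] len(1)[OF idx(7)]
            len(1)[OF idx(2)] len(1)[OF idx(3)] len(1)[OF idx(4)] crs ab ij])
    show False
    proof (rule caseA_final[OF gW Wg inj gW[OF idx(2)] ij])
      show "dif (g i) (g j) \<subseteq> {..<n}" using dif_sub[of "g i" "g j"] len(1)[OF idx(2)] by simp
      fix i' l :: nat assume h: "i' < 6" "l < n" "l \<notin> dif (g i) (g j)"
      have "i' \<in> {i,j,k,a,b,c}" using idx(1)[OF h(1)] .
      then have "g i' \<in> {g a, g b, g c, g i, g j, g k}" by blast
      then show "g i' ! l = g i ! l" using ag h(2,3) by blast
    qed simp
  qed
  have crX: "card (dif (g x) (g y)) = 2" if "x \<in> {3,4,5}" "y \<in> {0,1,2}" for x y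
    using cr[of x y] that by auto
  have crY: "card (dif (g x) (g y)) = 2" if "x \<in> {0,1,2}" "y \<in> {3,4,5}" for x y
    using cr[of x y] that by auto
  have g3X: "card (dif (g x) (g y)) \<ge> 3" if "x \<in> {3,4,5}" "y \<in> {3,4,5}" "x \<noteq> y" for x y
    using ge3[of x y] that by auto
  have g3Y: "card (dif (g x) (g y)) \<ge> 3" if "x \<in> {0,1,2}" "y \<in> {0,1,2}" "x \<noteq> y" for x y
    using ge3[of x y] that by auto
  have AX: False if "card (dif (g i) (g j)) = 3" "{i,j,k} = {0,1,2}" for i j k
  proof -
    have m: "i \<in> {0,1,2}" "j \<in> {0,1,2}" "k \<in> {0,1,2}" using that(2) by blast+
    show False
    proof (rule A[of i j k 3 4 5])
      show "\<And>i'. i' < 6 \<Longrightarrow> i' \<in> {i,j,k,3,4,5}" using less6 that(2) by blast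
      show "i < 6" "j < 6" "k < 6" using m by auto
      show "card (dif (g 3) (g i)) = 2" "card (dif (g 3) (g j)) = 2" "card (dif (g 3) (g k)) = 2"
        "card (dif (g 4) (g i)) = 2" "card (dif (g 4) (g j)) = 2" "card (dif (g 4) (g k)) = 2"
        "card (dif (g 5) (g i)) = 2" "card (dif (g 5) (g j)) = 2" "card (dif (g 5) (g k)) = 2"
        using m by (auto intro!: crX)
      show "card (dif (g 3) (g 4)) \<ge> 3" by (rule g3X) auto
    qed (use that in simp_all)
  qed
  have AY: False if "card (dif (g i) (g j)) = 3" "{i,j,k} = {3,4,5}" for i j k
  proof -
    have m: "i \<in> {3,4,5}" "j \<in> {3,4,5}" "k \<in> {3,4,5}" using that(2) by blast+
    show False
    proof (rule A[of i j k 0 1 2])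
      show "\<And>i'. i' < 6 \<Longrightarrow> i' \<in> {i,j,k,0,1,2}" using less6 that(2) by blast
      show "i < 6" "j < 6" "k < 6" using m by auto
      show "card (dif (g 0) (g i)) = 2" "card (dif (g 0) (g j)) = 2" "card (dif (g 0) (g k)) = 2"
        "card (dif (g 1) (g i)) = 2" "card (dif (g 1) (g j)) = 2" "card (dif (g 1) (g k)) = 2"
        "card (dif (g 2) (g i)) = 2" "card (dif (g 2) (g j)) = 2" "card (dif (g 2) (g k)) = 2"
        using m by (auto intro!: crY)
      show "card (dif (g 0) (g 1)) \<ge> 3" by (rule g3Y) auto
    qed (use that in simp_all)
  qed
  show False
  proof (cases "\<exists>i j. i < 6 \<and> j < 6 \<and> i \<noteq> j \<and> (i < 3 \<longleftrightarrow> j < 3) \<and> card (dif (g i) (g j)) = 3")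
    case True
    then obtain i j where ij: "i < 6" "j < 6" "i \<noteq> j" "(i < 3 \<longleftrightarrow> j < 3)" "card (dif (g i) (g j)) = 3"
      by blast
    consider "i < 3" "j < 3" | "3 \<le> i" "3 \<le> j" using ij(4) by linarith
    then show False
    proof cases
      case 1
      have "i = 0 \<or> i = 1 \<or> i = 2" "j = 0 \<or> j = 1 \<or> j = 2" using 1 by presburger+
      then have "{i,j,3-i-j} = {0,1,2}" using ij(3) by (elim disjE) auto
      then show False using AX ij(5) by blast
    next
      case 2
      have "i = 3 \<or> i = 4 \<or> i = 5" "j = 3 \<or> j = 4 \<or> j = 5" using 2 less6[OF ij(1)] less6[OF ij(2)] by auto
      then have "{i,j,12-i-j} = {3,4,5}" using ij(3) by (elim disjE) auto
      then show False using AY ij(5) by blast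
    qed
  next
    case False
    have g4: "card (dif (g i) (g j)) \<ge> 4" if "i < 6" "j < 6" "i \<noteq> j" "(i < 3 \<longleftrightarrow> j < 3)" for i j
      using ge3[OF that] False that by fastforce
    have "g 1 = g 2"
      by (rule caseB[of "g 0" n "g 1" "g 2" "g 3" "g 4"])
         (use len cr g4 in \<open>simp_all\<close>)
    then have "(1::nat) = 2" by (rule inj_onD[OF inj]) auto
    then show False by simp
  qed
qed


lemma valid_cv: "sorted b \<Longrightarrow> valid (cv b)"
  unfolding valid_def successively_conv_nth
proof (intro conjI allI impI)
  assume s: "sorted b"
  show "0 \<le> hd (cv b)" if "cv b \<noteq> []"
  proof -
    have "0 < length b" using that by (cases b) (auto simp: cv_def)
    then show ?thesis using that by (simp add: hd_conv_nth)
  qed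
  fix i assume i: "Suc i < length (cv b)"
  then have "b!i \<le> b!(Suc i)" using s by (simp add: sorted_iff_nth_Suc)
  then show "cv b ! i - 1 \<le> cv b ! Suc i" using i by simp
qed

lemma valid_nonneg: "valid c \<Longrightarrow> i < length c \<Longrightarrow> 0 \<le> c!i + int i"
proof (induction i)
  case 0 then show ?case by (cases c) (auto simp: valid_def)
next
  case (Suc i)
  then have "c!i - 1 \<le> c!(Suc i)" by (simp add: valid_def successively_conv_nth)
  then show ?case using Suc by simp
qed

definition bfrom :: "int list \<Rightarrow> nat list" where
  "bfrom c = map (\<lambda>i. nat (c!i + int i)) [0..<length c]"

lemma bfrom_props:
  assumes "valid c"
  shows "length (bfrom c) = length c" "cv (bfrom c) = c" "sorted (bfrom c)"
proof -
  show l: "length (bfrom c) = length c" by (simp add: bfrom_def)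
  show "cv (bfrom c) = c"
    by (rule nth_equalityI) (auto simp: l bfrom_def valid_nonneg[OF assms])
  show "sorted (bfrom c)"
    unfolding sorted_iff_nth_Suc
  proof (intro allI impI)
    fix i assume i: "Suc i < length (bfrom c)"
    have "c!i - 1 \<le> c!(Suc i)" using assms i l by (simp add: valid_def successively_conv_nth)
    then show "bfrom c ! i \<le> bfrom c ! Suc i" using i l by (simp add: bfrom_def)
  qed
qed

lemma sorted_nat_decomp:
  fixes b :: "nat list"
  assumes "sorted b"
  shows "b = replicate (length b - length (filter (\<lambda>x. x \<noteq> 0) b)) 0 @ filter (\<lambda>x. x \<noteq> 0) b"
  using assms
proof (induction b)
  case (Cons x b)
  show ?case
  proof (cases "x = 0")
    case True
    have "length (filter (\<lambda>x. x \<noteq> 0) b) \<le> length b" by simp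
    then have "Suc (length b) - length (filter (\<lambda>x. x \<noteq> 0) b) = Suc (length b - length (filter (\<lambda>x. x \<noteq> 0) b))"
      by linarith
    then show ?thesis using Cons True by simp
  next
    case False
    then have "\<forall>y\<in>set b. y \<noteq> 0" using Cons.prems by auto
    then have "filter (\<lambda>x. x \<noteq> 0) b = b" by (simp add: filter_id_conv)
    then show ?thesis using False by simp
  qed
qed simp

lemma pad_filter:
  assumes "sorted b" "length b = n"
  shows "pad n (filter (\<lambda>x. x \<noteq> 0) b) = b"
  using sorted_nat_decomp[OF assms(1)] assms(2) by (simp add: pad_def)

lemma filter_pad:
  assumes "canonical_board C"
  shows "filter (\<lambda>x. x \<noteq> 0) (pad n C) = C"
proof -
  have "filter (\<lambda>x. x \<noteq> 0) C = C"
    by (rule filter_True) (metis assms canonical_board_def)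
  then show ?thesis by (simp add: pad_def)
qed

lemma cv_inj: "length b1 = length b2 \<Longrightarrow> cv b1 = cv b2 \<Longrightarrow> b1 = b2"
proof (rule nth_equalityI)
  fix i assume "length b1 = length b2" "cv b1 = cv b2" "i < length b1"
  then have "cv b1 ! i = cv b2 ! i" by simp
  then show "b1 ! i = b2 ! i" using \<open>i < length b1\<close> \<open>length b1 = length b2\<close> by simp
qed

definition ndif :: "nat list \<Rightarrow> nat list \<Rightarrow> nat set" where
  "ndif u w = {l. l < length u \<and> u!l \<noteq> w!l}"

lemma dif_cv: "length b1 = length b2 \<Longrightarrow> dif (cv b1) (cv b2) = ndif b1 b2"
  by (auto simp: dif_def ndif_def)

lemma ndif_rep: "length P1 = length P2 \<Longrightarrow>
  ndif (replicate d 0 @ P1) (replicate d 0 @ P2) = (\<lambda>l. l + d) ` ndif P1 P2"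
proof (intro equalityI subsetI)
  fix l assume l: "l \<in> ndif (replicate d 0 @ P1) (replicate d 0 @ P2)" "length P1 = length P2"
  then have "l \<ge> d" by (cases "l < d") (auto simp: ndif_def nth_append)
  then show "l \<in> (\<lambda>l. l + d) ` ndif P1 P2"
    using l by (intro image_eqI[where x="l - d"]) (auto simp: ndif_def nth_append)
qed (auto simp: ndif_def nth_append)

lemma card_ndif_rep: "length P1 = length P2 \<Longrightarrow>
  card (ndif (replicate d 0 @ P1) (replicate d 0 @ P2)) = card (ndif P1 P2)"
  by (simp add: ndif_rep card_image inj_on_def)

lemma sum_list_nth_split:
  fixes P :: "nat list"
  assumes "x < length P" "y < length P" "x \<noteq> y"
  shows "sum_list P = P!x + P!y + (\<Sum>l\<in>{..<length P} - {x,y}. P!l)"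
proof -
  have "sum_list P = (\<Sum>l\<in>{..<length P}. P!l)" by (simp add: sum_list_sum_nth atLeast0LessThan)
  also have "\<dots> = (\<Sum>l\<in>{..<length P} - {x,y}. P!l) + (\<Sum>l\<in>{x,y}. P!l)"
    by (rule sum.subset_diff) (use assms in auto)
  finally show ?thesis using assms(3) by simp
qed

lemma edge_iff_card:
  fixes P1 P2 :: "nat list"
  assumes l: "length P1 = m" "length P2 = m" and s: "sum_list P1 = sum_list P2"
  shows "(\<exists>i j k. i < m \<and> j < m \<and> i \<noteq> j \<and> k > 0 \<and> P1!i = P2!i + k \<and> P2!j = P1!j + k \<and>
            (\<forall>l<m. l \<noteq> i \<longrightarrow> l \<noteq> j \<longrightarrow> P1!l = P2!l)) \<longleftrightarrow> card (ndif P1 P2) = 2"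
proof
  assume "\<exists>i j k. i < m \<and> j < m \<and> i \<noteq> j \<and> k > 0 \<and> P1!i = P2!i + k \<and> P2!j = P1!j + k \<and>
            (\<forall>l<m. l \<noteq> i \<longrightarrow> l \<noteq> j \<longrightarrow> P1!l = P2!l)"
  then obtain i j k where h: "i < m" "j < m" "i \<noteq> j" "k > 0" "P1!i = P2!i + k" "P2!j = P1!j + k"
      "\<forall>l<m. l \<noteq> i \<longrightarrow> l \<noteq> j \<longrightarrow> P1!l = P2!l" by blast
  have "ndif P1 P2 = {i,j}" using h l by (auto simp: ndif_def)
  then show "card (ndif P1 P2) = 2" using h(3) by simp
next
  assume "card (ndif P1 P2) = 2"
  then obtain x y where xy: "ndif P1 P2 = {x,y}" "x \<noteq> y" by (auto simp: card_2_iff)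
  have xyl: "x < m" "y < m" "P1!x \<noteq> P2!x" "P1!y \<noteq> P2!y" using xy(1) l by (auto simp: ndif_def)
  have rest: "\<forall>l<m. l \<noteq> x \<longrightarrow> l \<noteq> y \<longrightarrow> P1!l = P2!l" using xy(1) l by (auto simp: ndif_def)
  have "(\<Sum>l\<in>{..<m} - {x,y}. P1!l) = (\<Sum>l\<in>{..<m} - {x,y}. P2!l)"
    by (rule sum.cong) (use rest in auto)
  then have eq: "P1!x + P1!y = P2!x + P2!y"
    using sum_list_nth_split[of x P1 y] sum_list_nth_split[of x P2 y] xyl xy(2) l s by simp
  show "\<exists>i j k. i < m \<and> j < m \<and> i \<noteq> j \<and> k > 0 \<and> P1!i = P2!i + k \<and> P2!j = P1!j + k \<and>
            (\<forall>l<m. l \<noteq> i \<longrightarrow> l \<noteq> j \<longrightarrow> P1!l = P2!l)"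
  proof (cases "P1!x > P2!x")
    case True
    then show ?thesis using xyl xy(2) eq rest
      by (intro exI[of _ x] exI[of _ y] exI[of _ "P1!x - P2!x"]) auto
  next
    case False
    then have "P1!x < P2!x" using xyl by simp
    then show ?thesis using xyl xy(2) eq rest
      by (intro exI[of _ y] exI[of _ x] exI[of _ "P2!x - P1!x"]) auto
  qed
qed

lemma sum_list_pad: "sum_list (pad n C) = sum_list C"
  by (simp add: pad_def)

lemma sum_list_cv: "sum_list (cv b) = int (sum_list b) - (\<Sum>i<length b. int i)"
proof -
  have "sum_list (cv b) = sum_list (map (\<lambda>i. int (b!i) - int i) [0..<length b])"
    by (simp add: cv_def)
  also have "\<dots> = (\<Sum>i\<in>set [0..<length b]. int (b!i) - int i)"
    by (rule sum_set_upt_conv_sum_list_nat[symmetric])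
  also have "\<dots> = (\<Sum>i<length b. int (b!i)) - (\<Sum>i<length b. int i)"
    by (simp only: set_upt atLeast0LessThan sum_subtractf)
  also have "(\<Sum>i<length b. int (b!i)) = int (sum_list b)"
    by (simp add: sum_list_sum_nth atLeast0LessThan)
  finally show ?thesis .
qed

lemma pad_pad: "length C \<le> m \<Longrightarrow> m \<le> n \<Longrightarrow> pad n C = replicate (n - m) 0 @ pad m C"
  by (simp add: pad_def replicate_add[symmetric])


theorem theorem13:
  fixes B :: "nat list"
  assumes "sorted B"
  shows "\<not> graph_iso (rook_graph_vertices B) rook_edge K33_vertices K33_edge"
proof
  assume "graph_iso (rook_graph_vertices B) rook_edge K33_vertices K33_edge"
  then obtain f where bij: "bij_betw f (rook_graph_vertices B) {0..<6}"
    and Ed: "\<forall>u\<in>rook_graph_vertices B. \<forall>v\<in>rook_graph_vertices B. rook_edge u v \<longleftrightarrow> K33_edge (f u) (f v)"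
    by (auto simp: graph_iso_def K33_vertices_def)
  define V where "V = rook_graph_vertices B"
  have finV: "finite V" using bij_betw_finite[OF bij] by (simp add: V_def)
  define n where "n = Max (length ` insert B V)"
  have lenV: "length C \<le> n" if "C \<in> V" for C
    unfolding n_def using finV that by (intro Max_ge) auto
  have lenB: "length B \<le> n" unfolding n_def using finV by (intro Max_ge) auto
  have Vp: "canonical_board C" "rook_equiv C B" "sorted C" if "C \<in> V" for C
    using that by (auto simp: V_def rook_graph_vertices_def canonical_board_def)
  define M where "M = mset (cv (pad n B))"
  define \<phi> where "\<phi> C = cv (pad n C)" for C
  have F1: "\<phi> C \<in> Wset n M" if C: "C \<in> V" for C
  proof -
    have "length (\<phi> C) = n" using lenV[OF C] by (simp add: \<phi>_def length_pad)
    moreover have "mset (\<phi> C) = M"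
      unfolding \<phi>_def M_def by (rule rook_equiv_imp_mset[OF Vp(3)[OF C] assms lenV[OF C] lenB Vp(2)[OF C]])
    moreover have "valid (\<phi> C)" unfolding \<phi>_def by (rule valid_cv[OF sorted_pad[OF Vp(3)[OF C]]])
    ultimately show ?thesis by (simp add: Wset_def)
  qed
  have F2: "\<exists>C\<in>V. \<phi> C = c" if c: "c \<in> Wset n M" for c
  proof -
    have cW: "length c = n" "mset c = M" "valid c" using c by (auto simp: Wset_def)
    note bp = bfrom_props[OF cW(3)]
    define C where "C = filter (\<lambda>x. x \<noteq> 0) (bfrom c)"
    have sC: "sorted C" unfolding C_def using bp(3) by (simp add: sorted_wrt_filter)
    have canC: "canonical_board C" using sC by (simp add: canonical_board_def C_def)
    have lC: "length C \<le> n" unfolding C_def using bp(1) cW(1) by (metis length_filter_le)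
    have pC: "pad n C = bfrom c" unfolding C_def by (rule pad_filter[OF bp(3)]) (simp add: bp(1) cW(1))
    have phiC: "\<phi> C = c" by (simp add: \<phi>_def pC bp(2))
    have "rook_equiv C B"
      by (rule mset_imp_rook_equiv[OF sC assms lC lenB]) (simp add: pC bp(2) cW(2) M_def)
    then have "C \<in> V" using canC by (simp add: V_def rook_graph_vertices_def)
    then show ?thesis using phiC by blast
  qed
  have F3: "C1 = C2" if "C1 \<in> V" "C2 \<in> V" "\<phi> C1 = \<phi> C2" for C1 C2
  proof -
    have "pad n C1 = pad n C2"
      by (rule cv_inj) (use that lenV length_pad \<phi>_def in auto)
    then show ?thesis using filter_pad[OF Vp(1)[OF that(1)], of n] filter_pad[OF Vp(1)[OF that(2)], of n]
      by simp
  qed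
  have F4: "rook_edge C1 C2 \<longleftrightarrow> card (dif (\<phi> C1) (\<phi> C2)) = 2" if C: "C1 \<in> V" "C2 \<in> V" for C1 C2
  proof -
    define m where "m = max (length C1) (length C2)"
    have mn: "m \<le> n" using lenV C by (simp add: m_def)
    have l1: "length (pad m C1) = m" "length (pad m C2) = m" by (simp_all add: m_def length_pad)
    have "mset (\<phi> C1) = mset (\<phi> C2)" using F1[OF C(1)] F1[OF C(2)] by (simp add: Wset_def)
    then have "sum_list (\<phi> C1) = sum_list (\<phi> C2)" by (metis sum_mset_sum_list)
    moreover have ln: "length (pad n C1) = n" "length (pad n C2) = n"
      using length_pad lenV C by auto
    ultimately have "int (sum_list (pad n C1)) = int (sum_list (pad n C2))"
      unfolding \<phi>_def sum_list_cv ln by simp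
    then have s: "sum_list (pad m C1) = sum_list (pad m C2)" by (simp add: sum_list_pad)
    have "rook_edge C1 C2 \<longleftrightarrow> card (ndif (pad m C1) (pad m C2)) = 2"
      unfolding rook_edge_def Let_def m_def[symmetric]
      by (rule edge_iff_card[OF l1 s])
    also have "card (ndif (pad m C1) (pad m C2)) = card (ndif (pad n C1) (pad n C2))"
    proof -
      have e1: "pad n C1 = replicate (n-m) 0 @ pad m C1" by (rule pad_pad) (simp add: m_def, rule mn)
      have e2: "pad n C2 = replicate (n-m) 0 @ pad m C2" by (rule pad_pad) (simp add: m_def, rule mn)
      have "length (pad m C1) = length (pad m C2)" using l1 by simp
      then have "card (ndif (replicate (n-m) 0 @ pad m C1) (replicate (n-m) 0 @ pad m C2))
          = card (ndif (pad m C1) (pad m C2))" by (rule card_ndif_rep)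
      then show ?thesis using e1 e2 by simp
    qed
    also have "\<dots> = card (dif (\<phi> C1) (\<phi> C2))"
      unfolding \<phi>_def using lenV C by (simp add: dif_cv length_pad)
    finally show ?thesis .
  qed
  define h where "h i = inv_into V f i" for i
  have bijV: "bij_betw f V {0..<6}" using bij by (simp add: V_def)
  have hV: "h i \<in> V" "f (h i) = i" if "i < 6" for i
  proof -
    have "i \<in> f ` V" using bijV that by (simp add: bij_betw_def)
    then show "h i \<in> V" unfolding h_def by (rule inv_into_into)
    show "f (h i) = i" unfolding h_def by (rule bij_betw_inv_into_right[OF bijV]) (use that in simp)
  qed
  define g where "g i = \<phi> (h i)" for i
  show False
  proof (rule no_K33_abstract[of g n M])
    fix i :: nat assume "i < 6"
    then show "g i \<in> Wset n M" unfolding g_def using F1 hV by blast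
  next
    fix c assume "c \<in> Wset n M"
    then obtain C where C: "C \<in> V" "\<phi> C = c" using F2 by blast
    have "f C \<in> {0..<6}" using bijV C(1) by (auto simp: bij_betw_def)
    moreover have "h (f C) = C" unfolding h_def by (rule bij_betw_inv_into_left[OF bijV C(1)])
    ultimately show "\<exists>i<6. c = g i" using C(2) unfolding g_def by (intro exI[of _ "f C"]) auto
  next
    show "inj_on g {..<6}"
    proof (rule inj_onI)
      fix i j assume "i \<in> {..<6}" "j \<in> {..<6}" "g i = g j"
      then have "h i = h j" using F3 hV unfolding g_def by auto
      then show "i = j" using hV \<open>i \<in> {..<6}\<close> \<open>j \<in> {..<6}\<close> by (metis lessThan_iff)
    qed
  next
    fix i j :: nat assume ij: "i < 6" "j < 6"
    have "card (dif (g i) (g j)) = 2 \<longleftrightarrow> rook_edge (h i) (h j)"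
      unfolding g_def using F4 hV ij by simp
    also have "\<dots> \<longleftrightarrow> K33_edge (f (h i)) (f (h j))" using Ed hV ij unfolding V_def by blast
    also have "\<dots> \<longleftrightarrow> (i < 3 \<longleftrightarrow> 3 \<le> j)" using hV ij by (simp add: K33_edge_def)
    finally show "card (dif (g i) (g j)) = 2 \<longleftrightarrow> (i < 3 \<longleftrightarrow> 3 \<le> j)" .
  qed
qed

end
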